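(* Let $m\ge 2$ be an even integer and $k$ an integer with $\gcd(k,m)=1$. Let $\alpha\in\mathbb{F}_{2^m}$, $\alpha\neq 0$, and let $\sigma$ be a field automorphism of $\mathbb{F}_{2^m}$. Define $f:\mathbb{F}_{2^m}^2\to\mathbb{F}_{2^m}^2$ (identifying $\mathbb{F}_{2^m}^2$ additively with $\mathbb{F}_{2^{2m}}$) by $$f(x,y)=\big(x^{2^k+1}+\alpha\,\sigma(y^{2^k+1}),\ xy\big).$$ Then $f$ is APN if and only if $\alpha$ cannot be written as $a^{2^k+1}(t^{2^k}+t)^{1-\sigma}$ with $a,t\in\mathbb{F}_{2^m}$ and $t^{2^k}+t\neq 0$, where $z^{1-\sigma}$ denotes $z/\sigma(z)$ for $z\neq 0$.
   Context: A function $f$ on an elementary abelian $2$-group $V$ (here $V=\mathbb{F}_{2^{2m}}$) is almost perfect nonlinear (APN) if for every $a\neq 0$ and every $b$ the equation $f(x+a)-f(x)=b$ has at most two solutions $x\in V$. *)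

theory Defs
  imports Main "HOL-Library.Product_Plus"
begin

definition APN :: "('v::{ab_group_add,finite} \<Rightarrow> 'v) \<Rightarrow> bool" where
  "APN f \<longleftrightarrow> (\<forall>a b. a \<noteq> 0 \<longrightarrow> card {x. f (x + a) - f x = b} \<le> 2)"

definition field_automorphism :: "('a::field \<Rightarrow> 'a) \<Rightarrow> bool" where
  "field_automorphism \<sigma> \<longleftrightarrow> bij \<sigma> \<and> \<sigma> 1 = 1 \<and>
     (\<forall>x y. \<sigma> (x + y) = \<sigma> x + \<sigma> y) \<and> (\<forall>x y. \<sigma> (x * y) = \<sigma> x * \<sigma> y)"

end

theory Submission imports Defs begin

lemma c2_self: "(2::'a::field) = 0 \<Longrightarrow> x + x = (0::'a)"
  by (metis mult_2 mult_zero_left)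

lemma c2_neg: "(2::'a::field) = 0 \<Longrightarrow> - x = (x::'a)"
  by (metis c2_self add_eq_0_iff)

lemma c2_minus: "(2::'a::field) = 0 \<Longrightarrow> x - y = x + (y::'a)"
  by (metis c2_neg diff_conv_add_uminus)

lemma frob_add:
  assumes "(2::'a::field) = 0"
  shows "(x + y) ^ (2 ^ n) = x ^ (2 ^ n) + (y::'a) ^ (2 ^ n)"
proof (induction n)
  case 0 then show ?case by simp
next
  case (Suc n)
  have "(x + y) ^ (2 ^ Suc n) = ((x + y) ^ (2 ^ n))^2"
    by (simp add: power_mult[symmetric] mult.commute)
  also have "\<dots> = (x ^ (2 ^ n))^2 + (y ^ (2 ^ n))^2 + 2 * (x ^ (2 ^ n) * y ^ (2 ^ n))"
    by (simp add: Suc power2_eq_square algebra_simps)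
  also have "\<dots> = x ^ (2 ^ Suc n) + y ^ (2 ^ Suc n)"
    by (simp add: assms power_mult[symmetric] mult.commute)
  finally show ?case .
qed

lemma fermat_fin:
  fixes x :: "'a::{field,finite}"
  shows "x ^ card (UNIV::'a set) = x"
proof (cases "x = 0")
  case True then show ?thesis by (simp add: card_gt_0_iff[THEN iffD2] power_0_left)
next
  case False
  let ?S = "UNIV - {0::'a}"
  have bij: "bij_betw (\<lambda>y. x * y) ?S ?S"
    unfolding bij_betw_def
  proof
    show "inj_on ((*) x) ?S" using False by (auto simp: inj_on_def)
    show "(*) x ` ?S = ?S"
    proof
      show "(*) x ` ?S \<subseteq> ?S" using False by auto
      show "?S \<subseteq> (*) x ` ?S"
      proof
        fix y assume "y \<in> ?S"
        then have "y = x * (y / x)" "y / x \<in> ?S" using False by auto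
        then show "y \<in> (*) x ` ?S" by blast
      qed
    qed
  qed
  have "prod (\<lambda>y. x * y) ?S = prod id ?S"
    using prod.reindex_bij_betw[OF bij, of id] by simp
  moreover have "prod (\<lambda>y. x * y) ?S = x ^ card ?S * prod id ?S"
    by (simp add: prod.distrib)
  moreover have "prod id ?S \<noteq> 0" by simp
  ultimately have "x ^ card ?S = 1" by simp
  moreover have "card ?S = card (UNIV::'a set) - 1" by (simp add: card_Diff_singleton)
  moreover have "card (UNIV::'a set) > 0" by (simp add: finite_UNIV_card_ge_0)
  ultimately have "x ^ (card (UNIV::'a set) - 1) * x = x" by (metis mult_1)
  moreover have "x ^ (card (UNIV::'a set) - 1) * x = x ^ card (UNIV::'a set)"
  proof -
    obtain n where n: "card (UNIV::'a set) = Suc n" using \<open>card (UNIV::'a set) > 0\<close> gr0_implies_Suc by blast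
    show ?thesis unfolding n by (simp add: power_Suc2)
  qed
  ultimately show ?thesis by argo
qed

lemma frob_iter: "(x::'a::comm_semiring_1) ^ (2 ^ i) = x \<Longrightarrow> x ^ (2 ^ (i * p)) = x"
proof (induction p)
  case 0 then show ?case by simp
next
  case (Suc p)
  have "x ^ (2 ^ (i * Suc p)) = (x ^ (2 ^ (i * p))) ^ (2 ^ i)"
    by (simp add: power_add power_mult[symmetric] mult.commute)
  then show ?case using Suc by simp
qed

lemma fixed_01:
  fixes x :: "'a::{field,finite}"
  assumes "card (UNIV :: 'a set) = 2 ^ m" "gcd k m = 1" "m \<ge> 2" "x ^ (2 ^ k) = x"
  shows "x = 0 \<or> x = 1"
proof -
  have "k \<noteq> 0"
  proof
    assume "k = 0" then show False using assms(2,3) by simp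
  qed
  then obtain p q where pq: "k * p = m * q + gcd k m" using bezout_nat by blast
  have xm: "x ^ (2 ^ m) = x" using fermat_fin[of x] assms(1) by simp
  have "x = x ^ (2 ^ (k * p))" using frob_iter[OF assms(4)] by simp
  also have "\<dots> = (x ^ (2 ^ (m * q))) ^ 2"
    by (simp add: pq assms(2) power_mult[symmetric] mult.commute)
  also have "\<dots> = x ^ 2" using frob_iter[OF xm] by simp
  finally have "x * (x - 1) = 0" by (simp add: power2_eq_square algebra_simps)
  then show ?thesis by auto
qed

lemma aut_props:
  assumes "field_automorphism \<sigma>"
  shows "\<sigma> 0 = 0" "\<sigma> (x ^ n) = \<sigma> x ^ n" "\<sigma> (x + y) = \<sigma> x + \<sigma> y"
    "\<sigma> (x * y) = \<sigma> x * \<sigma> y" "(\<sigma> x = 0) = (x = 0)" "\<sigma> 1 = 1"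
proof -
  have add: "\<And>x y. \<sigma> (x + y) = \<sigma> x + \<sigma> y" and mul: "\<And>x y. \<sigma> (x * y) = \<sigma> x * \<sigma> y"
    and one: "\<sigma> 1 = 1" and b: "bij \<sigma>"
    using assms unfolding field_automorphism_def by auto
  show z: "\<sigma> 0 = 0" using add[of 0 0] by (metis add.right_neutral add_left_cancel)
  show "\<sigma> (x ^ n) = \<sigma> x ^ n" by (induction n) (simp_all add: one mul)
  show "\<sigma> (x + y) = \<sigma> x + \<sigma> y" by (rule add)
  show "\<sigma> (x * y) = \<sigma> x * \<sigma> y" by (rule mul)
  show "(\<sigma> x = 0) = (x = 0)" using b z by (metis bij_def inj_eq)
  show "\<sigma> 1 = 1" by (rule one)
qed

lemma scale_lem:
  fixes a u :: "'a::field"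
  shows "(u*a) ^ (2 ^ k) * a + (u*a) * a ^ (2 ^ k) = a ^ (2 ^ k + 1) * (u ^ (2 ^ k) + u)"
  by (simp add: power_mult_distrib algebra_simps)


definition Fm :: "'a::field \<Rightarrow> ('a \<Rightarrow> 'a) \<Rightarrow> nat \<Rightarrow> 'a \<times> 'a \<Rightarrow> 'a \<times> 'a" where
  "Fm \<alpha> \<sigma> k = (\<lambda>(x, y). (x ^ (2 ^ k + 1) + \<alpha> * \<sigma> (y ^ (2 ^ k + 1)), x * y))"

definition Bm :: "'a::field \<Rightarrow> ('a \<Rightarrow> 'a) \<Rightarrow> nat \<Rightarrow> 'a \<Rightarrow> 'a \<Rightarrow> 'a \<Rightarrow> 'a \<Rightarrow> 'a \<times> 'a" where
  "Bm \<alpha> \<sigma> k x y a b = (x^(2^k)*a + x*a^(2^k) + \<alpha>*\<sigma>(y^(2^k)*b + y*b^(2^k)), x*b + a*y)"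

lemma deriv_id:
  fixes \<alpha> :: "'a::field"
  assumes two: "(2::'a) = 0" and aut: "field_automorphism \<sigma>"
  shows "Fm \<alpha> \<sigma> k ((x,y) + (a,b)) - Fm \<alpha> \<sigma> k (x,y) = Fm \<alpha> \<sigma> k (a,b) + Bm \<alpha> \<sigma> k x y a b"
proof -
  have h: "\<And>x a::'a. (x+a)^(2^k+1) = x^(2^k+1) + a^(2^k+1) + (x^(2^k)*a + x*a^(2^k))"
    by (simp add: frob_add[OF two] algebra_simps)
  have "Fm \<alpha> \<sigma> k ((x,y) + (a,b)) = ((x+a)^(2^k+1) + \<alpha> * \<sigma> ((y+b)^(2^k+1)), (x+a)*(y+b))"
    by (simp add: Fm_def)
  also have "\<dots> = (x^(2^k+1) + a^(2^k+1) + (x^(2^k)*a + x*a^(2^k)) + \<alpha> * \<sigma> (y^(2^k+1) + b^(2^k+1) + (y^(2^k)*b + y*b^(2^k))), (x+a)*(y+b))"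
    by (simp only: h)
  finally show ?thesis
    by (simp add: Fm_def Bm_def aut_props(3)[OF aut] algebra_simps)
qed

lemma B_add:
  fixes \<alpha> :: "'a::field"
  assumes two: "(2::'a) = 0" and aut: "field_automorphism \<sigma>"
  shows "Bm \<alpha> \<sigma> k (xa+xb) (ya+yb) a b = Bm \<alpha> \<sigma> k xa ya a b + Bm \<alpha> \<sigma> k xb yb a b"
  by (simp add: Bm_def frob_add[OF two] aut_props[OF aut] algebra_simps)

lemma root_lem:
  fixes y b :: "'a::field"
  assumes two: "(2::'a) = 0" and fx: "\<And>u::'a. u^(2^k) = u \<Longrightarrow> u = 0 \<or> u = 1"
    and b: "b \<noteq> 0" and eq: "y^(2^k)*b + y*b^(2^k) = 0"
  shows "y = 0 \<or> y = b"
proof -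
  define u where "u = y / b"
  have yu: "y = u * b" using b by (simp add: u_def)
  have "b^(2^k+1) * (u^(2^k) + u) = 0" using eq scale_lem[of u b k] yu by simp
  then have "u^(2^k) + u = 0" using b by simp
  then have "u^(2^k) = - u" by (simp add: eq_neg_iff_add_eq_0)
  then have "u^(2^k) = u" using c2_neg[OF two] by simp
  then have "u = 0 \<or> u = 1" by (rule fx)
  then show ?thesis using yu by auto
qed

lemma kernel:
  fixes \<alpha> :: "'a::field"
  assumes two: "(2::'a) = 0" and aut: "field_automorphism \<sigma>"
    and fx: "\<And>u::'a. u^(2^k) = u \<Longrightarrow> u = 0 \<or> u = 1"
    and noex: "\<not> (\<exists>a t. t ^ (2 ^ k) + t \<noteq> 0 \<and>
              \<alpha> = a ^ (2 ^ k + 1) * ((t ^ (2 ^ k) + t) / \<sigma> (t ^ (2 ^ k) + t)))"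
    and anz: "\<alpha> \<noteq> 0" and nz: "(a,b) \<noteq> (0,0)" and ker: "Bm \<alpha> \<sigma> k x y a b = (0,0)"
  shows "(x,y) = (0,0) \<or> (x,y) = (a,b)"
proof -
  note sp = aut_props[OF aut]
  have e1: "x^(2^k)*a + x*a^(2^k) + \<alpha>*\<sigma>(y^(2^k)*b + y*b^(2^k)) = 0"
    and e2: "x*b + a*y = 0" using ker by (auto simp: Bm_def)
  show ?thesis
  proof (cases "a = 0")
    case True
    then have b: "b \<noteq> 0" using nz by auto
    then have x: "x = 0" using e2 True by simp
    then have "\<alpha>*\<sigma>(y^(2^k)*b + y*b^(2^k)) = 0" using e1 True by (simp add: power_0_left)
    then have "y^(2^k)*b + y*b^(2^k) = 0" using sp(5) anz by auto
    then have "y = 0 \<or> y = b" using root_lem[OF two fx b] by blast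
    then show ?thesis using x True by auto
  next
    case a: False
    show ?thesis
    proof (cases "b = 0")
      case True
      then have y: "y = 0" using e2 a by simp
      then have "x^(2^k)*a + x*a^(2^k) = 0" using e1 True sp(1) by (simp add: power_0_left)
      then have "x^(2^k)*a + x*a^(2^k) = 0" by simp
      then have "x = 0 \<or> x = a" using root_lem[OF two fx a] by blast
      then show ?thesis using y True by auto
    next
      case b: False
      define u where "u = x / a"
      have xu: "x = u * a" using a by (simp add: u_def)
      have "a*y = - (x*b)" using e2 by (simp add: eq_neg_iff_add_eq_0 add.commute)
      then have "a*y = x*b" using c2_neg[OF two] by simp
      then have yu: "y = u * b" using a xu by (simp add: field_simps)
      define s where "s = u^(2^k) + u"
      have e3: "a^(2^k+1)*s + \<alpha>*\<sigma>(b^(2^k+1)*s) = 0"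
        using e1 unfolding s_def xu yu scale_lem by simp
      show ?thesis
      proof (cases "s = 0")
        case True
        then have "u^(2^k) = - u" by (simp add: s_def eq_neg_iff_add_eq_0)
        then have "u^(2^k) = u" using c2_neg[OF two] by simp
        then have "u = 0 \<or> u = 1" by (rule fx)
        then show ?thesis using xu yu by auto
      next
        case False
        have "\<alpha>*\<sigma>(b^(2^k+1)*s) = - (a^(2^k+1)*s)" using e3
          by (simp add: eq_neg_iff_add_eq_0 add.commute)
        then have e4: "\<alpha>*(\<sigma> b^(2^k+1)*\<sigma> s) = a^(2^k+1)*s" using c2_neg[OF two] sp by simp
        have sb: "\<sigma> b \<noteq> 0" using b sp(5) by simp
        have ss: "\<sigma> s \<noteq> 0" using False sp(5) by simp
        have "\<alpha> = (a / \<sigma> b) ^ (2 ^ k + 1) * (s / \<sigma> s)"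
          using e4 sb ss by (simp add: power_divide field_simps)
        then show ?thesis using noex False unfolding s_def by blast
      qed
    qed
  qed
qed


theorem theorem9:
  fixes m k :: nat and \<alpha> :: "'a::{field,finite}" and \<sigma> :: "'a \<Rightarrow> 'a"
  assumes "CHAR('a) = 2" and "card (UNIV :: 'a set) = 2 ^ m"
    and "m \<ge> 2" and "even m" and "gcd k m = 1"
    and "\<alpha> \<noteq> 0" and "field_automorphism \<sigma>"
  shows "APN (\<lambda>(x, y). (x ^ (2 ^ k + 1) + \<alpha> * \<sigma> (y ^ (2 ^ k + 1)), x * y))
     \<longleftrightarrow> \<not> (\<exists>a t. t ^ (2 ^ k) + t \<noteq> 0 \<and>
              \<alpha> = a ^ (2 ^ k + 1) * ((t ^ (2 ^ k) + t) / \<sigma> (t ^ (2 ^ k) + t)))"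
proof -
  have two: "(2::'a) = 0" using of_nat_CHAR[where 'a='a] assms(1) by simp
  have aut: "field_automorphism \<sigma>" by (rule assms(7))
  note sp = aut_props[OF aut]
  have fx: "\<And>u::'a. u^(2^k) = u \<Longrightarrow> u = 0 \<or> u = 1"
    using fixed_01[OF assms(2) assms(5) assms(3)] by blast
  have Feq: "(\<lambda>(x, y). (x ^ (2 ^ k + 1) + \<alpha> * \<sigma> (y ^ (2 ^ k + 1)), x * y)) = Fm \<alpha> \<sigma> k"
    by (simp add: Fm_def)
  have D: "\<And>p a b. Fm \<alpha> \<sigma> k (p + (a,b)) - Fm \<alpha> \<sigma> k p = Fm \<alpha> \<sigma> k (a,b) + Bm \<alpha> \<sigma> k (fst p) (snd p) a b"
    using deriv_id[OF two aut] by (metis prod.collapse)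
  show ?thesis unfolding Feq
  proof
    assume apn: "APN (Fm \<alpha> \<sigma> k)"
    show "\<not> (\<exists>a t. t ^ (2 ^ k) + t \<noteq> 0 \<and>
              \<alpha> = a ^ (2 ^ k + 1) * ((t ^ (2 ^ k) + t) / \<sigma> (t ^ (2 ^ k) + t)))"
    proof
      assume "\<exists>a t. t ^ (2 ^ k) + t \<noteq> 0 \<and>
              \<alpha> = a ^ (2 ^ k + 1) * ((t ^ (2 ^ k) + t) / \<sigma> (t ^ (2 ^ k) + t))"
      then obtain a t where s0: "t ^ (2 ^ k) + t \<noteq> 0" and
        al: "\<alpha> = a ^ (2 ^ k + 1) * ((t ^ (2 ^ k) + t) / \<sigma> (t ^ (2 ^ k) + t))" by blast
      have ss: "\<sigma> (t ^ (2 ^ k) + t) \<noteq> 0" using s0 sp(5) by simp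
      have asig: "\<alpha> * \<sigma> (t ^ (2 ^ k) + t) = a ^ (2 ^ k + 1) * (t ^ (2 ^ k) + t)"
        using al ss by simp
      have t0: "t \<noteq> 0" using s0 by (auto simp: power_0_left)
      have t1: "t \<noteq> 1" using s0 two by auto
      define q where "q = (a, 1::'a)"
      have a0: "a \<noteq> 0" using assms(6) al by (auto simp: power_0_left)
      have qnz: "q \<noteq> 0" using a0 by (simp add: q_def zero_prod_def)
      let ?S = "{p. Fm \<alpha> \<sigma> k (p + q) - Fm \<alpha> \<sigma> k p = Fm \<alpha> \<sigma> k q}"
      have B0: "Bm \<alpha> \<sigma> k 0 0 a 1 = (0,0)" by (simp add: Bm_def sp(1) power_0_left)
      have B1: "Bm \<alpha> \<sigma> k a 1 a 1 = (0,0)"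
        using c2_self[OF two, of "a^(2^k)*a"] c2_self[OF two, of a] sp(1) two
        by (simp add: Bm_def mult.commute)
      have B2: "Bm \<alpha> \<sigma> k (t*a) t a 1 = (0,0)"
      proof -
        have "Bm \<alpha> \<sigma> k (t*a) t a 1 = (a ^ (2 ^ k + 1) * (t ^ (2 ^ k) + t) + \<alpha> * \<sigma> (t ^ (2 ^ k) + t), t*a + a*t)"
          by (simp add: Bm_def scale_lem)
        also have "\<dots> = (0,0)" unfolding asig using c2_self[OF two] two by (simp add: mult.commute)
        finally show ?thesis .
      qed
      have "{(0,0), (a,1), (t*a,t)} \<subseteq> ?S"
        using D[of _ a 1] B0 B1 B2 by (auto simp: q_def zero_prod_def)
      then have "card {(0,0), (a,1), (t*a,t)} \<le> card ?S" by (intro card_mono) auto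
      moreover have "card {(0::'a,0::'a), (a,1), (t*a,t)} = 3" using t0 t1 a0 by auto
      moreover have "card ?S \<le> 2" using apn qnz unfolding APN_def by blast
      ultimately show False by simp
    qed
  next
    assume noex: "\<not> (\<exists>a t. t ^ (2 ^ k) + t \<noteq> 0 \<and>
              \<alpha> = a ^ (2 ^ k + 1) * ((t ^ (2 ^ k) + t) / \<sigma> (t ^ (2 ^ k) + t)))"
    show "APN (Fm \<alpha> \<sigma> k)" unfolding APN_def
    proof (intro allI impI)
      fix q c :: "'a \<times> 'a" assume qnz: "q \<noteq> 0"
      obtain a b where q: "q = (a,b)" by fastforce
      have nz: "(a,b) \<noteq> (0,0)" using qnz q by (simp add: zero_prod_def)
      let ?S = "{p. Fm \<alpha> \<sigma> k (p + q) - Fm \<alpha> \<sigma> k p = c}"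
      show "card ?S \<le> 2"
      proof (cases "?S = {}")
        case True then show ?thesis by (simp only: card.empty)
      next
        case False
        then obtain p0 where p0: "p0 \<in> ?S" by blast
        have "?S \<subseteq> {p0, p0 + q}"
        proof
          fix p assume p: "p \<in> ?S"
          obtain x y where pxy: "p = (x,y)" by fastforce
          obtain x0 y0 where p0xy: "p0 = (x0,y0)" by fastforce
          have "Bm \<alpha> \<sigma> k x y a b = Bm \<alpha> \<sigma> k x0 y0 a b"
            using p p0 D[of p a b] D[of p0 a b] q pxy p0xy by simp
          moreover have "Bm \<alpha> \<sigma> k x y a b = Bm \<alpha> \<sigma> k (x - x0) (y - y0) a b + Bm \<alpha> \<sigma> k x0 y0 a b"
            using B_add[OF two aut, where xa="x - x0" and xb=x0 and ya="y - y0" and yb=y0 and k=k and a=a and b=b and \<alpha>=\<alpha>] by simp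
          ultimately have "Bm \<alpha> \<sigma> k (x - x0) (y - y0) a b = (0,0)" by (simp add: zero_prod_def)
          then have "(x - x0, y - y0) = (0,0) \<or> (x - x0, y - y0) = (a,b)"
            using kernel[OF two aut fx noex assms(6) nz] by blast
          then show "p \<in> {p0, p0 + q}" using pxy p0xy q by (auto simp: algebra_simps)
        qed
        then have "card ?S \<le> card {p0, p0 + q}" by (intro card_mono) auto
        also have "\<dots> \<le> 2" by (simp add: card_insert_if)
        finally show ?thesis .
      qed
    qed
  qed
qed

end
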